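(* Let $n\ge2$ and let $\mathcal C=X_1\cap\dots\cap X_n\subseteq\mathbb R^{n+1}$ be a tropical complete intersection curve. Then every vertex of $\mathcal C$ has valence 3, i.e. is contained in exactly three edges (bounded or unbounded) of $\mathcal C$.
   Context: Over $(\mathbb R,\max,+)$, a tropical polynomial is $f(x)=\max_{a\in\mathcal A}\{\lambda_a+a\cdot x\}$, $\mathcal A\subseteq\mathbb Z^{m}$ finite, $\lambda_a\in\mathbb R$; Newton polytope $\Delta_f=\operatorname{conv}(\mathcal A)$; lifted polytope $\tilde\Delta_f=\operatorname{conv}\{(a,t):a\in\mathcal A,t\le\lambda_a\}$, whose bounded faces project to a regular lattice subdivision $\operatorname{Subdiv}(f)$ of $\Delta_f$. $V_{tr}(f)$ is the non-linear locus of $f$, a polyhedral complex of pure dimension $m-1$, with a bijection $C\mapsto C^\vee$ from $k$-cells of $V_{tr}(f)$ to $(m-k)$-cells of $\operatorname{Subdiv}(f)$, $C^\vee=\operatorname{conv}\{a:\lambda_a+a\cdot x=f(x)\}$ for $x$ in the relative interior of $C$. $V_{tr}(f)$ is smooth if every maximal cell of $\operatorname{Subdiv}(f)$ is a lattice simplex of volume $1/m!$. For $X_i=V_{tr}(f_i)$, $i=1,\dots,n$, let $U=X_1\cup\dots\cup X_n=V_{tr}(f_1\odot\cdots\odot f_n)$ (the product polynomial has function $f_1+\dots+f_n$), and $\operatorname{Subdiv}_U=\operatorname{Subdiv}(f_1\odot\cdots\odot f_n)$. Since $\tilde\Delta_{f_1\odot\cdots\odot f_n}=\tilde\Delta_{f_1}+\dots+\tilde\Delta_{f_n}$,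 each bounded face decomposes uniquely as a Minkowski sum of bounded faces of the $\tilde\Delta_{f_i}$; projecting gives the privileged representation $\Lambda=\Lambda_1+\dots+\Lambda_n$ of each cell $\Lambda\in\operatorname{Subdiv}_U$, $\Lambda_i\in\operatorname{Subdiv}(f_i)$. Each cell $C$ of $I=X_1\cap\dots\cap X_n$ is uniquely $C_1\cap\dots\cap C_n$ with $C_i$ a cell of $X_i$ containing $C$ in its relative interior; $C$ is a cell of $U$ and $C^\vee\in\operatorname{Subdiv}_U$ has privileged representation $C_1^\vee+\dots+C_n^\vee$. The intersection is transversal if for all $J\subseteq\{1,\dots,n\}$, $|J|\ge2$, $\bigcap_{i\in J}X_i$ has dimension $m-|J|$ and every cell $C$ of it satisfies $\dim C^\vee=\sum_{i\in J}\dim C_i^\vee$ (duals w.r.t. $\bigcup_{i\in J}X_i$). A tropical complete intersection curve is a transversal intersection $\mathcal C=X_1\cap\dots\cap X_n$ of $n\ge 2$ smooth tropical hypersurfaces in $\mathbb R^{n+1}$ (so $m=n+1$); it is a one-dimensional polyhedral complex, some of whose edges are unbounded. *)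

theory Defs
  imports "HOL-Analysis.Analysis"
begin

text \<open>A tropical polynomial is given by its (finite, nonempty) support set of
  lattice exponents A and a coefficient function lambda (only its values on A matter).\<close>

type_synonym 'd tpoly = "(real^'d) set \<times> (real^'d \<Rightarrow> real)"

definition lattice_pt :: "real^'d \<Rightarrow> bool" where
  "lattice_pt a \<longleftrightarrow> (\<forall>j. a $ j \<in> \<int>)"

definition is_tpoly :: "('d::finite) tpoly \<Rightarrow> bool" where
  "is_tpoly f \<longleftrightarrow> finite (fst f) \<and> fst f \<noteq> {} \<and> (\<forall>a\<in>fst f. lattice_pt a)"

definition tval :: "('d::finite) tpoly \<Rightarrow> real^'d \<Rightarrow> real" where
  "tval f x = Max ((\<lambda>a. snd f a + a \<bullet> x) ` fst f)"

definition argmx :: "('d::finite) tpoly \<Rightarrow> real^'d \<Rightarrow> (real^'d) set" where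
  "argmx f x = {a \<in> fst f. snd f a + a \<bullet> x = tval f x}"

definition Vtr :: "('d::finite) tpoly \<Rightarrow> (real^'d) set" where
  "Vtr f = {x. \<not> (\<exists>e>0. \<exists>c w. \<forall>y\<in>ball x e. tval f y = c + w \<bullet> y)}"

text \<open>Cells of Subdiv(f): projections of bounded faces of the lifted polytope,
  i.e. conv{a : lambda_a + a.x = f(x)} for x in R^m.\<close>
definition subdiv :: "('d::finite) tpoly \<Rightarrow> (real^'d) set set" where
  "subdiv f = {convex hull (argmx f x) | x. True}"

definition smooth_tpoly :: "('d::finite) tpoly \<Rightarrow> bool" where
  "smooth_tpoly f \<longleftrightarrow>
     (\<forall>P\<in>subdiv f. (\<forall>Q\<in>subdiv f. P \<subseteq> Q \<longrightarrow> Q = P) \<longrightarrow>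
        (\<exists>S. finite S \<and> card S = CARD('d) + 1 \<and> (\<forall>a\<in>S. lattice_pt a) \<and>
             \<not> affine_dependent S \<and> P = convex hull S \<and>
             measure lebesgue P = 1 / fact CARD('d)))"

text \<open>Tropical product of the polynomials F i, i in J (its function is the sum).\<close>
definition tprod :: "(nat \<Rightarrow> ('d::finite) tpoly) \<Rightarrow> nat set \<Rightarrow> 'd tpoly" where
  "tprod F J =
     ((\<lambda>a. \<Sum>i\<in>J. a i) ` (PiE J (\<lambda>i. fst (F i))),
      (\<lambda>b. Max {\<Sum>i\<in>J. snd (F i) (a i) | a. a \<in> PiE J (\<lambda>i. fst (F i)) \<and> (\<Sum>i\<in>J. a i) = b}))"

definition tinter :: "(nat \<Rightarrow> ('d::finite) tpoly) \<Rightarrow> nat set \<Rightarrow> (real^'d) set" where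
  "tinter F J = (\<Inter>i\<in>J. Vtr (F i))"

text \<open>The cell of the intersection of the X_i (i in J) having x0 in its relative
  interior: C = C_1 \<inter> ... with C_i = {x : argmax_i(x0) \<subseteq> argmax_i(x)} the cell of X_i
  containing x0 in its relative interior.\<close>
definition icell :: "(nat \<Rightarrow> ('d::finite) tpoly) \<Rightarrow> nat set \<Rightarrow> real^'d \<Rightarrow> (real^'d) set" where
  "icell F J x0 = {x. \<forall>i\<in>J. argmx (F i) x0 \<subseteq> argmx (F i) x}"

definition icells :: "(nat \<Rightarrow> ('d::finite) tpoly) \<Rightarrow> nat set \<Rightarrow> (real^'d) set set" where
  "icells F J = icell F J ` tinter F J"

text \<open>Cells C of the
  intersection over J are parametrised by points x0 of their relative interiors;
  C^vee (dual w.r.t. the union, i.e. w.r.t. the product polynomial) is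
  conv(argmax of the product at x0), and C_i^vee = conv(argmax_i(x0)).\<close>
definition transversal :: "(nat \<Rightarrow> ('d::finite) tpoly) \<Rightarrow> nat \<Rightarrow> bool" where
  "transversal F n \<longleftrightarrow>
     (\<forall>J. J \<subseteq> {1..n} \<and> 2 \<le> card J \<longrightarrow>
        (\<exists>C\<in>icells F J. aff_dim C = int CARD('d) - int (card J)) \<and>
        (\<forall>C\<in>icells F J. aff_dim C \<le> int CARD('d) - int (card J)) \<and>
        (\<forall>x0\<in>tinter F J.
           aff_dim (convex hull (argmx (tprod F J) x0)) =
           (\<Sum>i\<in>J. aff_dim (convex hull (argmx (F i) x0)))))"

definition curve_vertices :: "(nat \<Rightarrow> ('d::finite) tpoly) \<Rightarrow> nat \<Rightarrow> (real^'d) set" where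
  "curve_vertices F n = {v. {v} \<in> icells F {1..n}}"

definition curve_edges :: "(nat \<Rightarrow> ('d::finite) tpoly) \<Rightarrow> nat \<Rightarrow> (real^'d) set set" where
  "curve_edges F n = {E \<in> icells F {1..n}. aff_dim E = 1}"

end

theory Submission
  imports Defs
begin

lemma det_Ints:
  fixes A :: "real^'n^'n"
  assumes "\<forall>i j. A$i$j \<in> \<int>"
  shows "det A \<in> \<int>"
  unfolding det_def
  by (intro Ints_sum Ints_mult Ints_prod) (auto simp: assms)

lemma unimod_wo:
  fixes X :: "(real^'n::{finite,wellorder}) set"
  assumes fin: "finite X" and cX: "card X = Suc CARD('n)" and lat: "\<forall>a\<in>X. lattice_pt a"
    and meas: "measure lebesgue (convex hull X) = 1 / fact CARD('n)"
    and p: "p \<in> convex hull X" and lp: "lattice_pt p"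
  shows "p \<in> X"
proof -
  from cX obtain x0 where x0: "x0 \<in> X" by (metis card.empty ex_in_conv nat.distinct(1))
  have "card (X - {x0}) = card (UNIV :: 'n set)" using cX x0 fin by simp
  then obtain f where bij: "bij_betw f (UNIV::'n set) (X - {x0})"
    using finite_same_card_bij[of "UNIV::'n set" "X - {x0}"] fin by auto
  define M where "M \<equiv> (\<chi> i. \<chi> j. f j $ i - x0 $ i) :: real^'n::{finite,wellorder}^'n::{finite,wellorder}"
  have cont: "measure lborel (convex hull X) = \<bar>det M\<bar> / fact (CARD('n))"
    using content_simplex[OF fin cX x0 bij] unfolding M_def .
  have "convex hull X \<in> sets lborel"
    using finite_imp_compact_convex_hull[OF fin] by (auto dest: compact_imp_closed)
  then have "measure lebesgue (convex hull X) = measure lborel (convex hull X)" by simp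
  with meas cont have dM: "\<bar>det M\<bar> = 1" by (simp add: field_simps)
  have fX: "f j \<in> X" for j using bij by (auto simp: bij_betw_def)
  have Mint: "\<forall>i j. M$i$j \<in> \<int>" using lat fX x0 unfolding M_def lattice_pt_def by auto
  from p obtain u where u0: "\<forall>x\<in>X. 0 \<le> u x" and u1: "sum u X = 1" and up: "(\<Sum>x\<in>X. u x *\<^sub>R x) = p"
    using convex_hull_finite[OF fin] by auto
  define c where "c \<equiv> (\<chi> j. u (f j)) :: real^'n::{finite,wellorder}"
  have "p - x0 = (\<Sum>x\<in>X. u x *\<^sub>R (x - x0))"
    using up u1 by (simp add: scaleR_diff_right sum_subtractf scaleR_sum_left[symmetric])
  also have "\<dots> = (\<Sum>x\<in>X - {x0}. u x *\<^sub>R (x - x0))"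
    using fin x0 by (simp add: sum.remove)
  also have "\<dots> = (\<Sum>j\<in>UNIV. u (f j) *\<^sub>R (f j - x0))"
    using sum.reindex_bij_betw[OF bij, of "\<lambda>x. u x *\<^sub>R (x - x0)"] by simp
  finally have pe: "p - x0 = (\<Sum>j\<in>UNIV. u (f j) *\<^sub>R (f j - x0))" .
  have Mc: "M *v c = p - x0"
    unfolding pe by (simp add: vec_eq_iff matrix_vector_mult_def M_def c_def sum_component mult.commute)
  have dM0: "det M \<noteq> 0" using dM by auto
  have ck: "c$k \<in> \<int>" for k
  proof -
    have "c = (\<chi> k. det(\<chi> i j. if j=k then (p - x0)$i else M$i$j) / det M)"
      using cramer[OF dM0] Mc by blast
    then have ce: "c$k = det(\<chi> i j. if j=k then (p - x0)$i else M$i$j) / det M" by simp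
    have "det(\<chi> i j. if j=k then (p - x0)$i else M$i$j) \<in> \<int>"
      apply (rule det_Ints) using Mint lp x0 lat unfolding lattice_pt_def by auto
    moreover have "det M = 1 \<or> det M = -1" using dM by linarith
    ultimately show ?thesis unfolding ce by auto
  qed
  have cnn: "0 \<le> c$k" for k using u0 fX by (simp add: c_def)
  have "sum u (X - {x0}) = (\<Sum>j\<in>UNIV. u (f j))"
    using sum.reindex_bij_betw[OF bij, of u] by simp
  moreover have "sum u X = u x0 + sum u (X - {x0})" using fin x0 by (simp add: sum.remove)
  ultimately have sumc: "(\<Sum>j\<in>UNIV. c$j) = 1 - u x0" using u1 by (simp add: c_def)
  have ux0: "0 \<le> u x0" using u0 x0 by auto
  have key: "\<exists>x\<in>X. u x = 1"
  proof (cases "\<exists>k. c$k \<noteq> 0")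
    case True
    then obtain k where "c$k \<noteq> 0" by auto
    from ck[of k] obtain z where z: "c$k = of_int z" by (auto elim: Ints_cases)
    with cnn[of k] \<open>c$k \<noteq> 0\<close> have "z \<ge> 1" by auto
    then have "c$k \<ge> 1" using z by simp
    moreover have "c$k \<le> (\<Sum>j\<in>UNIV. c$j)"
      by (rule member_le_sum) (auto simp: cnn)
    ultimately have "c$k = 1" "u x0 = 0" using sumc ux0 by linarith+
    then show ?thesis using fX[of k] by (auto simp: c_def)
  next
    case False
    then have "u x0 = 1" using sumc by simp
    then show ?thesis using x0 by blast
  qed
  then obtain x where x: "x \<in> X" "u x = 1" by blast
  have "sum u (X - {x}) = 0" using fin x u1 by (simp add: sum.remove)
  then have "\<forall>y\<in>X - {x}. u y = 0" using u0 fin by (subst (asm) sum_nonneg_eq_0_iff) auto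
  then have "(\<Sum>y\<in>X. u y *\<^sub>R y) = x"
    using fin x by (simp add: sum.remove)
  then show ?thesis using up x by simp
qed


typedef 'a wc = "UNIV :: 'a set" morphisms rep_wc abs_wc by auto

instance wc :: (finite) finite
proof
  have "(UNIV :: 'a wc set) = abs_wc ` UNIV"
    by (metis rep_wc_inverse surj_def)
  then show "finite (UNIV :: 'a wc set)" by (metis finite finite_imageI)
qed

instantiation wc :: (finite) linorder begin
definition "a < b \<longleftrightarrow> to_nat (rep_wc a) < to_nat (rep_wc b)"
definition "a \<le> b \<longleftrightarrow> to_nat (rep_wc a) \<le> to_nat (rep_wc b)"
instance
  by intro_classes (auto simp add: less_eq_wc_def less_wc_def rep_wc_inject)
end

instance wc :: (finite) wellorder
proof -
  have "wf {(x :: 'a wc, y). x < y}"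
    by(auto simp add: trancl_def tranclp_less intro!: finite_acyclic_wf acyclicI)
  thus "OFCLASS('a wc, wellorder_class)"
    by(rule wf_wellorderI) intro_classes
qed

definition Phi :: "real^'a::finite \<Rightarrow> real^'a wc" where
  "Phi x = (\<chi> i. x $ rep_wc i)"
definition Psi :: "real^'a::finite wc \<Rightarrow> real^'a" where
  "Psi y = (\<chi> j. y $ abs_wc j)"

lemma wc_inv[simp]: "rep_wc (abs_wc y) = y" "abs_wc (rep_wc x) = x"
  by (simp_all add: abs_wc_inverse rep_wc_inverse)

lemma Phi_Psi[simp]: "Phi (Psi y) = y" "Psi (Phi x) = x"
  by (simp_all add: Phi_def Psi_def vec_eq_iff rep_wc_inverse abs_wc_inverse)

lemma linear_Phi: "linear Phi"
  by (auto simp: linear_iff Phi_def vec_eq_iff)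

lemma prod_Basis_vec: "(\<Prod>b\<in>Basis. (x::real^'n::finite) \<bullet> b) = (\<Prod>i\<in>UNIV. x$i)"
proof -
  have B: "Basis = range (\<lambda>i. axis i (1::real) :: real^'n)"
    by (auto simp: Basis_vec_def)
  have I: "inj (\<lambda>i. axis i (1::real) :: real^'n)"
    by (auto simp: inj_def axis_eq_axis)
  have "(\<Prod>b\<in>Basis. x \<bullet> b) = (\<Prod>i\<in>UNIV. x \<bullet> axis i 1)"
    unfolding B by (subst prod.reindex[OF I]) simp
  also have "\<dots> = (\<Prod>i\<in>UNIV. x$i)" by (simp add: inner_axis)
  finally show ?thesis .
qed

lemma lborel_Phi: "(lborel :: (real^'a::finite wc) measure) = distr lborel borel (Phi :: real^'a \<Rightarrow> _)"
proof (rule lborel_eqI)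
  have [measurable]: "(Phi :: real^'a \<Rightarrow> _) \<in> borel \<rightarrow>\<^sub>M borel"
    by (intro borel_measurable_continuous_onI linear_continuous_on linear_conv_bounded_linear[THEN iffD1] linear_Phi)
  fix l u :: "real^'a wc"
  assume le: "\<And>b. b \<in> Basis \<Longrightarrow> l \<bullet> b \<le> u \<bullet> b"
  have pre: "Phi -` box l u = box (Psi l) (Psi u)"
  proof -
    have "x \<in> box l u \<longleftrightarrow> (\<forall>i. l$i < x$i \<and> x$i < u$i)" for x :: "real^'a wc"
      by (simp add: mem_box_cart)
    moreover have "x \<in> box (Psi l) (Psi u) \<longleftrightarrow> (\<forall>j. l$abs_wc j < x$j \<and> x$j < u$abs_wc j)" for x
      by (simp add: mem_box_cart Psi_def)
    moreover have "(\<forall>i. l$i < x$rep_wc i \<and> x$rep_wc i < u$i) \<longleftrightarrow> (\<forall>j. l$abs_wc j < x$j \<and> x$j < u$abs_wc j)" for x :: "real^'a"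
      by (metis wc_inv)
    ultimately show ?thesis
      by (auto simp: Phi_def)
  qed
  have "(\<Prod>b\<in>Basis. (Psi u - Psi l) \<bullet> b) = (\<Prod>j\<in>UNIV. u$abs_wc j - l$abs_wc j)"
    by (simp add: prod_Basis_vec Psi_def)
  also have "\<dots> = (\<Prod>i\<in>UNIV. u$i - l$i)"
    by (rule prod.reindex_bij_witness[where i=rep_wc and j=abs_wc]) (auto simp: abs_wc_inverse rep_wc_inverse)
  also have "\<dots> = (\<Prod>b\<in>Basis. (u - l) \<bullet> b)" by (simp add: prod_Basis_vec)
  finally have eqp: "(\<Prod>b\<in>Basis. (Psi u - Psi l) \<bullet> b) = (\<Prod>b\<in>Basis. (u - l) \<bullet> b)" .
  have le2: "(Psi l) \<bullet> b \<le> (Psi u) \<bullet> b" if "b \<in> Basis" for b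
  proof -
    from that obtain j where b: "b = axis j 1" by (auto simp: Basis_vec_def)
    have "l \<bullet> axis (abs_wc j) 1 \<le> u \<bullet> axis (abs_wc j) 1" by (rule le) (auto simp: Basis_vec_def)
    then show ?thesis by (simp add: b inner_axis Psi_def)
  qed
  show "emeasure (distr lborel borel Phi) (box l u) = (\<Prod>b\<in>Basis. (u - l) \<bullet> b)"
    using le2 eqp by (simp add: emeasure_distr pre prod_nonneg)
qed simp

lemma measure_Phi:
  fixes A :: "(real^'a::finite) set"
  assumes "compact A"
  shows "measure lebesgue (Phi ` A) = measure lebesgue A"
proof -
  have [measurable]: "(Phi :: real^'a \<Rightarrow> _) \<in> borel \<rightarrow>\<^sub>M borel"
    by (intro borel_measurable_continuous_onI linear_continuous_on linear_conv_bounded_linear[THEN iffD1] linear_Phi)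
  have cA: "compact (Phi ` A)"
    by (intro compact_continuous_image assms linear_continuous_on linear_conv_bounded_linear[THEN iffD1] linear_Phi)
  have bA: "A \<in> sets borel" using assms by (auto dest: compact_imp_closed)
  have bB: "Phi ` A \<in> sets borel" using cA by (auto dest: compact_imp_closed)
  have pre: "Phi -` (Phi ` A) = A" by (auto, metis Phi_Psi(2))
  have "measure lebesgue (Phi ` A) = measure lborel (Phi ` A)" using bB by simp
  also have "\<dots> = measure (distr lborel borel (Phi :: real^'a \<Rightarrow> _)) (Phi ` A)"
    by (simp add: lborel_Phi[symmetric])
  also have "\<dots> = measure lborel A" using bB by (simp add: measure_distr pre)
  also have "\<dots> = measure lebesgue A" using bA by simp
  finally show ?thesis .
qed


lemma card_wc: "CARD('a::finite wc) = CARD('a)"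
proof -
  have "bij_betw abs_wc (UNIV::'a set) (UNIV :: 'a wc set)"
    by (rule bij_betw_byWitness[where f'=rep_wc]) simp_all
  then show ?thesis by (simp add: bij_betw_same_card)
qed

lemma unimod:
  fixes S :: "(real^'d::finite) set"
  assumes fin: "finite S" and cS: "card S = CARD('d) + 1" and lat: "\<forall>a\<in>S. lattice_pt a"
    and meas: "measure lebesgue (convex hull S) = 1 / fact CARD('d)"
    and p: "p \<in> convex hull S" and lp: "lattice_pt p"
  shows "p \<in> S"
proof -
  have injP: "inj (Phi :: real^'d \<Rightarrow> _)" by (metis Phi_Psi(2) injI)
  let ?X = "Phi ` S"
  have "Phi p \<in> ?X"
  proof (rule unimod_wo)
    show "finite ?X" using fin by simp
    show "card ?X = Suc CARD('d wc)" using cS card_image[OF inj_on_subset[OF injP]] by (simp add: card_wc)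
    show "\<forall>a\<in>?X. lattice_pt a" using lat by (auto simp: lattice_pt_def Phi_def)
    show "lattice_pt (Phi p)" using lp by (auto simp: lattice_pt_def Phi_def)
    have e: "convex hull ?X = Phi ` (convex hull S)"
      by (rule convex_hull_linear_image[OF linear_Phi, symmetric])
    show "Phi p \<in> convex hull ?X" unfolding e using p by blast
    show "measure lebesgue (convex hull ?X) = 1 / fact CARD('d wc)"
      unfolding e card_wc using measure_Phi[OF finite_imp_compact_convex_hull[OF fin]] meas by simp
  qed
  then show ?thesis using injP by (auto dest: injD)
qed

lemma tval_ge: "is_tpoly f \<Longrightarrow> a \<in> fst f \<Longrightarrow> snd f a + a \<bullet> x \<le> tval f x"
  unfolding tval_def is_tpoly_def by (intro Max_ge) auto

lemma tval_attained: assumes f: "is_tpoly f" shows "\<exists>a\<in>fst f. tval f x = snd f a + a \<bullet> x"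
proof -
  have "Max ((\<lambda>a. snd f a + a \<bullet> x) ` fst f) \<in> (\<lambda>a. snd f a + a \<bullet> x) ` fst f"
    by (rule Max_in) (use f in \<open>auto simp: is_tpoly_def\<close>)
  then show ?thesis unfolding tval_def by auto
qed

lemma argmx_ne: "is_tpoly f \<Longrightarrow> argmx f x \<noteq> {}"
  using tval_attained[of f x] unfolding argmx_def by force

lemma argmx_sub: "argmx f x \<subseteq> fst f"
  unfolding argmx_def by auto

lemma argmx_fin: "is_tpoly f \<Longrightarrow> finite (argmx f x)"
  unfolding is_tpoly_def using argmx_sub by (metis finite_subset)

lemma argmx_local:
  assumes f: "is_tpoly f"
  shows "\<exists>e>0. \<forall>y. dist y x < e \<longrightarrow> argmx f y \<subseteq> argmx f x"
proof -
  obtain b0 where b0: "b0 \<in> argmx f x" using argmx_ne[OF f] by blast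
  let ?N = "fst f - argmx f x"
  let ?U = "\<Inter>a\<in>?N. {y. snd f a + a \<bullet> y < snd f b0 + b0 \<bullet> y}"
  have "open ?U"
    using f unfolding is_tpoly_def
    by (intro open_INT) (auto intro!: open_Collect_less continuous_intros)
  moreover have "x \<in> ?U"
  proof -
    have "snd f a + a \<bullet> x < snd f b0 + b0 \<bullet> x" if "a \<in> ?N" for a
      using that b0 tval_ge[OF f, of a x] unfolding argmx_def by auto
    then show ?thesis by auto
  qed
  ultimately obtain e where e: "e > 0" "ball x e \<subseteq> ?U" by (meson open_contains_ball)
  have "argmx f y \<subseteq> argmx f x" if "dist y x < e" for y
  proof
    fix a assume a: "a \<in> argmx f y"
    show "a \<in> argmx f x"
    proof (rule ccontr)
      assume "a \<notin> argmx f x"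
      with a have "a \<in> ?N" by (auto simp: argmx_def)
      moreover have "y \<in> ?U" using e that by (auto simp: dist_commute)
      ultimately have "snd f a + a \<bullet> y < snd f b0 + b0 \<bullet> y" by auto
      moreover have "snd f b0 + b0 \<bullet> y \<le> tval f y" using b0 tval_ge[OF f] by (auto simp: argmx_def)
      ultimately show False using a by (auto simp: argmx_def)
    qed
  qed
  then show ?thesis using e by blast
qed

lemma argmx_step:
  assumes f: "is_tpoly f"
  shows "\<exists>e>0. \<forall>t. 0 < t \<and> t < e \<longrightarrow>
     argmx f (x + t *\<^sub>R u) = {a\<in>argmx f x. \<forall>b\<in>argmx f x. b \<bullet> u \<le> a \<bullet> u}"
proof -
  obtain e0 where e0: "e0 > 0" "\<And>y. dist y x < e0 \<Longrightarrow> argmx f y \<subseteq> argmx f x"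
    using argmx_local[OF f] by blast
  define e where "e = e0 / (norm u + 1)"
  have nu: "norm u + 1 > 0" by (smt (verit) norm_ge_zero)
  then have e: "e > 0" using e0 by (simp add: e_def)
  have "argmx f (x + t *\<^sub>R u) = {a\<in>argmx f x. \<forall>b\<in>argmx f x. b \<bullet> u \<le> a \<bullet> u}"
    if t: "0 < t" "t < e" for t
  proof -
    let ?y = "x + t *\<^sub>R u"
    have "dist ?y x = t * norm u" using t by (simp add: dist_norm)
    also have "\<dots> < e0"
    proof -
      have "t * norm u \<le> t * (norm u + 1)" using t by simp
      also have "\<dots> < e * (norm u + 1)" using t nu by (intro mult_strict_right_mono) auto
      also have "\<dots> = e0" using nu by (simp add: e_def)
      finally show ?thesis .
    qed
    finally have sub: "argmx f ?y \<subseteq> argmx f x" using e0 by blast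
    have val: "snd f a + a \<bullet> ?y = tval f x + t * (a \<bullet> u)" if "a \<in> argmx f x" for a
      using that by (simp add: argmx_def inner_add_right algebra_simps)
    obtain a0 where a0: "a0 \<in> argmx f ?y" using argmx_ne[OF f] by blast
    have a0x: "a0 \<in> argmx f x" using a0 sub by blast
    have tv: "tval f ?y = tval f x + t * (a0 \<bullet> u)" using a0 val[OF a0x] by (simp add: argmx_def)
    show ?thesis
    proof (intro set_eqI iffI)
      fix a assume a: "a \<in> argmx f ?y"
      then have ax: "a \<in> argmx f x" using sub by blast
      have "b \<bullet> u \<le> a \<bullet> u" if b: "b \<in> argmx f x" for b
      proof -
        have "snd f b + b \<bullet> ?y \<le> tval f ?y" using b tval_ge[OF f] by (auto simp: argmx_def)
        also have "\<dots> = snd f a + a \<bullet> ?y" using a by (simp add: argmx_def)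
        finally have "t * (b \<bullet> u) \<le> t * (a \<bullet> u)" using val[OF b] val[OF ax] by simp
        then show ?thesis using t by simp
      qed
      then show "a \<in> {a\<in>argmx f x. \<forall>b\<in>argmx f x. b \<bullet> u \<le> a \<bullet> u}" using ax by blast
    next
      fix a assume a: "a \<in> {a\<in>argmx f x. \<forall>b\<in>argmx f x. b \<bullet> u \<le> a \<bullet> u}"
      then have ax: "a \<in> argmx f x" and m: "a0 \<bullet> u \<le> a \<bullet> u" using a0x by auto
      have "tval f ?y \<le> snd f a + a \<bullet> ?y" using tv val[OF ax] m t by (simp add: mult_left_mono)
      moreover have "snd f a + a \<bullet> ?y \<le> tval f ?y" using ax tval_ge[OF f] by (auto simp: argmx_def)
      ultimately show "a \<in> argmx f ?y" using ax by (auto simp: argmx_def)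
    qed
  qed
  then show ?thesis using e by blast
qed

lemma Vtr_iff:
  assumes f: "is_tpoly f"
  shows "x \<in> Vtr f \<longleftrightarrow> (\<exists>a b. a \<in> argmx f x \<and> b \<in> argmx f x \<and> a \<noteq> b)"
proof
  assume "x \<in> Vtr f"
  show "\<exists>a b. a \<in> argmx f x \<and> b \<in> argmx f x \<and> a \<noteq> b"
  proof (rule ccontr)
    assume nd: "\<not> ?thesis"
    obtain a where a: "a \<in> argmx f x" using argmx_ne[OF f] by blast
    with nd have A: "argmx f x = {a}" by blast
    obtain e where e: "e > 0" "\<And>y. dist y x < e \<Longrightarrow> argmx f y \<subseteq> argmx f x"
      using argmx_local[OF f] by blast
    have "tval f y = snd f a + a \<bullet> y" if "y \<in> ball x e" for y
    proof -
      have "argmx f y \<subseteq> {a}" using e(2)[of y] that A by (auto simp: dist_commute)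
      with argmx_ne[OF f, of y] have "a \<in> argmx f y" by auto
      then show ?thesis by (simp add: argmx_def)
    qed
    then have "\<exists>e>0. \<exists>c w. \<forall>y\<in>ball x e. tval f y = c + w \<bullet> y" using e(1) by blast
    with \<open>x \<in> Vtr f\<close> show False unfolding Vtr_def by blast
  qed
next
  assume "\<exists>a b. a \<in> argmx f x \<and> b \<in> argmx f x \<and> a \<noteq> b"
  then obtain a b where ab: "a \<in> argmx f x" "b \<in> argmx f x" "a \<noteq> b" by blast
  show "x \<in> Vtr f"
  proof (rule ccontr)
    assume "x \<notin> Vtr f"
    then obtain e c w where e: "e > 0" "\<And>y. y \<in> ball x e \<Longrightarrow> tval f y = c + w \<bullet> y"
      by (auto simp: Vtr_def)
    have eq: "w = a" if a: "a \<in> argmx f x" for a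
    proof (rule ccontr)
      assume ne: "w \<noteq> a"
      define s where "s = e / (2 * (norm (w - a) + 1))"
      have nw: "norm (w - a) + 1 > 0" by (smt (verit) norm_ge_zero)
      have s: "s > 0" using e nw by (simp add: s_def)
      define y where "y = x - s *\<^sub>R (w - a)"
      have "dist y x = s * norm (w - a)" using s by (simp add: y_def dist_norm)
      also have "\<dots> < e"
      proof -
        have "s * norm (w - a) \<le> s * (norm (w - a) + 1)" using s by simp
        also have "\<dots> = e / 2" using nw by (simp add: s_def field_simps)
        finally show ?thesis using e by simp
      qed
      finally have yb: "y \<in> ball x e" by (simp add: dist_commute)
      have xb: "x \<in> ball x e" using e by simp
      have "snd f a + a \<bullet> y \<le> c + w \<bullet> y" using e(2)[OF yb] tval_ge[OF f, of a y] subsetD[OF argmx_sub a] by simp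
      moreover have "snd f a + a \<bullet> x = c + w \<bullet> x" using e(2)[OF xb] a by (simp add: argmx_def)
      ultimately have "0 \<le> (w - a) \<bullet> (y - x)" by (simp add: inner_diff_left inner_diff_right algebra_simps)
      also have "(w - a) \<bullet> (y - x) = - s * ((w - a) \<bullet> (w - a))" by (simp add: y_def)
      finally have "(w - a) \<bullet> (w - a) \<le> 0" using s by (simp add: mult_le_0_iff)
      then have "(w - a) \<bullet> (w - a) = 0" using inner_ge_zero[of "w - a"] by linarith
      then have "w - a = 0" by simp
      then show False using ne by simp
    qed
    from eq[OF ab(1)] eq[OF ab(2)] ab(3) show False by simp
  qed
qed


lemma argmx_indep:
  fixes f :: "'d::finite tpoly"
  assumes f: "is_tpoly f" and sm: "smooth_tpoly f"
  shows "\<not> affine_dependent (argmx f x)"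
proof -
  have "subdiv f \<subseteq> (\<lambda>B. convex hull B) ` Pow (fst f)"
    unfolding subdiv_def using argmx_sub by blast
  then have fin: "finite (subdiv f)" using f unfolding is_tpoly_def by (meson finite_Pow_iff finite_imageI finite_subset)
  have P0: "convex hull (argmx f x) \<in> subdiv f" unfolding subdiv_def by blast
  obtain Q where Q: "Q \<in> subdiv f" "convex hull (argmx f x) \<subseteq> Q" "\<forall>R\<in>subdiv f. Q \<subseteq> R \<longrightarrow> Q = R"
    using finite_has_maximal2[OF fin P0] by blast
  have max: "\<forall>R\<in>subdiv f. Q \<subseteq> R \<longrightarrow> R = Q" using Q(3) by auto
  obtain S where S: "finite S" "card S = CARD('d) + 1" "\<forall>a\<in>S. lattice_pt a" "\<not> affine_dependent S"
    "Q = convex hull S" "measure lebesgue Q = 1 / fact CARD('d)"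
    using sm Q(1) max unfolding smooth_tpoly_def by blast
  have "argmx f x \<subseteq> S"
  proof
    fix a assume a: "a \<in> argmx f x"
    have "a \<in> convex hull (argmx f x)" by (rule hull_inc[OF a])
    then have "a \<in> Q" using Q(2) by (rule subsetD[rotated])
    then have aS: "a \<in> convex hull S" using S(5) by simp
    have la: "lattice_pt a" using a argmx_sub f unfolding is_tpoly_def by blast
    have m: "measure lebesgue (convex hull S) = 1 / fact CARD('d)" using S(5,6) by simp
    show "a \<in> S" by (rule unimod[OF S(1) S(2) S(3) m aS la])
  qed
  then show ?thesis by (rule affine_independent_subset[OF S(4)])
qed


lemma argmx_step_ev:
  assumes "is_tpoly f"
  shows "\<forall>\<^sub>F t in at_right 0. argmx f (x + t *\<^sub>R u) = {a\<in>argmx f x. \<forall>b\<in>argmx f x. b \<bullet> u \<le> a \<bullet> u}"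
  using argmx_step[OF assms, of x u] unfolding eventually_at_right_field by blast

lemma evex: assumes "eventually P (at_right (0::real))" shows "\<exists>t>0. P t"
proof -
  have "eventually (\<lambda>t. 0 < t \<and> P t) (at_right (0::real))"
    using assms eventually_at_right_less by (rule eventually_conj[rotated])
  moreover have "at_right (0::real) \<noteq> bot" using trivial_limit_at_right_real by blast
  ultimately show ?thesis using eventually_happens' by blast
qed

lemma sum_one_nat:
  fixes g :: "'i \<Rightarrow> nat"
  assumes "finite J" "sum g J = 1"
  shows "\<exists>i0\<in>J. g i0 = 1 \<and> (\<forall>i\<in>J-{i0}. g i = 0)"
proof -
  obtain i0 where i0: "i0 \<in> J" "g i0 \<noteq> 0" using assms by (metis sum.neutral zero_neq_one)
  have "sum g J = g i0 + sum g (J - {i0})" using assms i0 by (simp add: sum.remove)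
  then have "g i0 = 1" "sum g (J - {i0}) = 0" using assms i0 by linarith+
  then show ?thesis using i0 assms by auto
qed


theorem lemma3p1:
  fixes F :: "nat \<Rightarrow> 'd::finite tpoly" and n :: nat
  assumes "2 \<le> n"
    and "CARD('d) = n + 1"
    and "\<forall>i\<in>{1..n}. is_tpoly (F i)"
    and "\<forall>i\<in>{1..n}. smooth_tpoly (F i)"
    and "transversal F n"
    and "v \<in> curve_vertices F n"
  shows "card {E \<in> curve_edges F n. v \<in> E} = 3"
proof -
  define J where "J = {1..n}"
  have finJ: "finite J" and cJ: "card J = n" by (simp_all add: J_def)
  have tp: "is_tpoly (F i)" if "i \<in> J" for i using assms(3) that J_def by auto
  have sm: "smooth_tpoly (F i)" if "i \<in> J" for i using assms(4) that J_def by auto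
  have trJ: "J \<subseteq> {1..n} \<and> 2 \<le> card J" using cJ assms(1) J_def by simp
  from assms(6) obtain x0 where x0: "x0 \<in> tinter F J" "icell F J x0 = {v}"
    unfolding curve_vertices_def icells_def J_def by auto
  have "x0 \<in> icell F J x0" by (simp add: icell_def)
  then have "x0 = v" using x0 by simp
  with x0 have vI: "v \<in> tinter F J" and iv: "icell F J v = {v}" by auto
  define A where "A i = argmx (F i) v" for i
  have vV: "v \<in> Vtr (F i)" if "i \<in> J" for i using vI that by (simp add: tinter_def)
  have Afin: "finite (A i)" if "i \<in> J" for i using argmx_fin[OF tp[OF that]] by (simp add: A_def)
  have Acard2: "2 \<le> card (A i)" if i: "i \<in> J" for i
  proof -
    obtain a b where ab: "a \<in> A i" "b \<in> A i" "a \<noteq> b" using vV[OF i] Vtr_iff[OF tp[OF i]] A_def by blast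
    have "card {a, b} \<le> card (A i)" using ab Afin[OF i] by (intro card_mono) auto
    then show ?thesis using ab by simp
  qed
  have Aind: "\<not> affine_dependent (A i)" if "i \<in> J" for i
    using argmx_indep[OF tp[OF that] sm[OF that]] by (simp add: A_def)
  have Ane: "A i \<noteq> {}" if "i \<in> J" for i using Acard2[OF that] by auto
  have ev: "\<forall>\<^sub>F t in at_right 0. \<forall>i\<in>J. argmx (F i) (v + t *\<^sub>R u) = {a\<in>A i. \<forall>b\<in>A i. b \<bullet> u \<le> a \<bullet> u}" for u
  proof -
    have "\<forall>i\<in>J. eventually (\<lambda>t. argmx (F i) (v + t *\<^sub>R u) = {a\<in>A i. \<forall>b\<in>A i. b \<bullet> u \<le> a \<bullet> u}) (at_right 0)"
      unfolding A_def using argmx_step_ev[OF tp] by blast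
    then show ?thesis by (rule eventually_ball_finite[OF finJ])
  qed
  have P: "u = 0" if h: "\<forall>i\<in>J. \<forall>a\<in>A i. \<forall>b\<in>A i. a \<bullet> u = b \<bullet> u" for u
  proof -
    obtain t where t: "t > 0" "\<forall>i\<in>J. argmx (F i) (v + t *\<^sub>R u) = {a\<in>A i. \<forall>b\<in>A i. b \<bullet> u \<le> a \<bullet> u}"
      using evex[OF ev[of u]] by blast
    have "\<forall>i\<in>J. argmx (F i) (v + t *\<^sub>R u) = A i"
    proof
      fix i assume i: "i \<in> J"
      have "{a\<in>A i. \<forall>b\<in>A i. b \<bullet> u \<le> a \<bullet> u} = A i"
      proof (intro set_eqI iffI)
        fix a assume a: "a \<in> A i"
        have "\<forall>b\<in>A i. b \<bullet> u \<le> a \<bullet> u" using h i a by (metis order_refl)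
        then show "a \<in> {a\<in>A i. \<forall>b\<in>A i. b \<bullet> u \<le> a \<bullet> u}" using a by blast
      qed auto
      then show "argmx (F i) (v + t *\<^sub>R u) = A i" using t(2) i by simp
    qed
    then have "v + t *\<^sub>R u \<in> icell F J v" by (auto simp: icell_def A_def)
    then have "v + t *\<^sub>R u = v" using iv by simp
    then show "u = 0" using t by simp
  qed
  define c where "c i = (SOME a. a \<in> A i)" for i
  have cA: "c i \<in> A i" if "i \<in> J" for i using Ane[OF that] unfolding c_def by (simp add: some_in_eq)
  have hc: "a \<bullet> z = c i \<bullet> z"
    if i: "i \<in> J" and a: "a \<in> A i" and zW: "\<forall>x\<in>(\<lambda>a. a - c i) ` (A i - {c i}). z \<bullet> x = 0" for i a z
  proof (cases "a = c i")
    case False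
    then have "z \<bullet> (a - c i) = 0" using zW a by blast
    then show ?thesis by (simp add: inner_diff_right inner_commute)
  qed simp
  define W where "W = (\<Union>i\<in>J. (\<lambda>a. a - c i) ` (A i - {c i}))"
  have finW: "finite W" unfolding W_def using finJ Afin by auto
  have spanW: "span W = UNIV"
  proof (rule ccontr)
    assume "span W \<noteq> UNIV"
    then obtain z where z: "z \<noteq> 0" "\<forall>x\<in>span W. z \<bullet> x = 0" using span_not_UNIV_orthogonal by blast
    have zW: "\<forall>x\<in>W. z \<bullet> x = 0" using z(2) span_base by blast
    have "\<forall>i\<in>J. \<forall>a\<in>A i. \<forall>b\<in>A i. a \<bullet> z = b \<bullet> z"
    proof (intro ballI)
      fix i a b assume i: "i \<in> J" and a: "a \<in> A i" and b: "b \<in> A i"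
      have zi: "\<forall>x\<in>(\<lambda>a. a - c i) ` (A i - {c i}). z \<bullet> x = 0" using zW i unfolding W_def by blast
      show "a \<bullet> z = b \<bullet> z" using hc[OF i a zi] hc[OF i b zi] by simp
    qed
    then have "z = 0" by (rule P)
    with z show False by simp
  qed
  have dimle: "CARD('d) \<le> card W"
    using dim_le_card[of UNIV W] spanW finW by simp
  have "card W \<le> (\<Sum>i\<in>J. card ((\<lambda>a. a - c i) ` (A i - {c i})))"
    unfolding W_def by (rule card_UN_le[OF finJ])
  also have "\<dots> \<le> (\<Sum>i\<in>J. card (A i) - 1)"
  proof (rule sum_mono)
    fix i assume i: "i \<in> J"
    have "card ((\<lambda>a. a - c i) ` (A i - {c i})) \<le> card (A i - {c i})" by (rule card_image_le) (use Afin[OF i] in simp)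
    also have "\<dots> = card (A i) - 1" using cA[OF i] Afin[OF i] by simp
    finally show "card ((\<lambda>a. a - c i) ` (A i - {c i})) \<le> card (A i) - 1" .
  qed
  finally have low: "CARD('d) \<le> (\<Sum>i\<in>J. card (A i) - 1)" using dimle by linarith
  have tr2: "\<forall>C\<in>icells F J. aff_dim C \<le> int CARD('d) - int (card J)"
    using assms(5) trJ unfolding transversal_def by blast
  have tr: "aff_dim (convex hull (argmx (tprod F J) v)) = (\<Sum>i\<in>J. aff_dim (convex hull (A i)))"
    using assms(5) vI trJ unfolding transversal_def A_def by blast
  have "aff_dim (convex hull (argmx (tprod F J) v)) \<le> int CARD('d)"
    using aff_dim_le_DIM[of "convex hull (argmx (tprod F J) v)"] by simp
  moreover have "aff_dim (convex hull (A i)) = int (card (A i) - 1)" if i: "i \<in> J" for i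
    using aff_dim_affine_independent[OF Aind[OF i]] Acard2[OF i] by (simp add: aff_dim_convex_hull of_nat_diff)
  ultimately have "(\<Sum>i\<in>J. int (card (A i) - 1)) \<le> int CARD('d)" using tr by simp
  then have "int (\<Sum>i\<in>J. card (A i) - 1) \<le> int CARD('d)" by (simp add: of_nat_sum)
  with low have sumA: "(\<Sum>i\<in>J. card (A i) - 1) = n + 1" using assms(2) by linarith
  define g where "g i = card (A i) - 2" for i
  have "(\<Sum>i\<in>J. card (A i) - 1) = (\<Sum>i\<in>J. g i + 1)"
  proof (rule sum.cong[OF refl])
    fix i assume "i \<in> J"
    then have "2 \<le> card (A i)" by (rule Acard2)
    then show "card (A i) - 1 = g i + 1" by (simp add: g_def)
  qed
  also have "\<dots> = sum g J + (\<Sum>i\<in>J. 1)" by (rule sum.distrib)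
  also have "\<dots> = sum g J + n" using cJ by simp
  finally have "sum g J = 1" using sumA by simp
  then obtain i0 where i0: "i0 \<in> J" "g i0 = 1" "\<forall>i\<in>J-{i0}. g i = 0"
    using sum_one_nat[OF finJ] by blast
  have A3: "card (A i0) = 3" using i0 Acard2[OF i0(1)] by (simp add: g_def)
  have A2: "card (A i) = 2" if i: "i \<in> J - {i0}" for i
  proof -
    have "g i = 0" using i0(3) i by blast
    moreover have "2 \<le> card (A i)" using Acard2 i by blast
    ultimately show ?thesis by (simp add: g_def)
  qed
  define E where "E T = {x. T \<subseteq> argmx (F i0) x \<and> (\<forall>i\<in>J-{i0}. A i \<subseteq> argmx (F i) x)}" for T
  have icellE: "icell F J y = E (argmx (F i0) y)" if "\<forall>i\<in>J-{i0}. argmx (F i) y = A i" for y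
  proof (intro set_eqI)
    fix x
    have "(\<forall>i\<in>J. argmx (F i) y \<subseteq> argmx (F i) x) \<longleftrightarrow>
      argmx (F i0) y \<subseteq> argmx (F i0) x \<and> (\<forall>i\<in>J-{i0}. argmx (F i) y \<subseteq> argmx (F i) x)"
      using i0(1) by blast
    also have "(\<forall>i\<in>J-{i0}. argmx (F i) y \<subseteq> argmx (F i) x) \<longleftrightarrow> (\<forall>i\<in>J-{i0}. A i \<subseteq> argmx (F i) x)"
      using that by auto
    finally show "x \<in> icell F J y \<longleftrightarrow> x \<in> E (argmx (F i0) y)"
      unfolding icell_def E_def by simp
  qed
  obtain p q r where pqr: "A i0 = {p, q, r}" "p \<noteq> q" "q \<noteq> r" "p \<noteq> r"
    using A3[unfolded card_3_iff] by blast
  have dir: "\<exists>y. y \<noteq> v \<and> argmx (F i0) y = {s, s'} \<and> (\<forall>i\<in>J-{i0}. argmx (F i) y = A i) \<and> y \<in> tinter F J"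
    if st: "A i0 = {s, s', t}" "s \<noteq> s'" "s \<noteq> t" "s' \<noteq> t" for s s' t
  proof -
    define X where "X = (\<Union>i\<in>J-{i0}. (\<lambda>a. a - c i) ` (A i - {c i})) \<union> {s - s'}"
    have finX: "finite X" unfolding X_def using finJ Afin by auto
    have "card X \<le> card (\<Union>i\<in>J-{i0}. (\<lambda>a. a - c i) ` (A i - {c i})) + 1"
      unfolding X_def using card_Un_le[of _ "{s - s'}"] by simp
    also have "card (\<Union>i\<in>J-{i0}. (\<lambda>a. a - c i) ` (A i - {c i})) \<le> (\<Sum>i\<in>J-{i0}. card ((\<lambda>a. a - c i) ` (A i - {c i})))"
      by (rule card_UN_le) (use finJ in simp)
    also have "\<dots> \<le> (\<Sum>i\<in>J-{i0}. 1)"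
    proof (rule sum_mono)
      fix i assume i: "i \<in> J - {i0}"
      have "card ((\<lambda>a. a - c i) ` (A i - {c i})) \<le> card (A i - {c i})" by (rule card_image_le) (use Afin i in simp)
      also have "\<dots> = 1" using cA[of i] Afin[of i] A2[OF i] i by simp
      finally show "card ((\<lambda>a. a - c i) ` (A i - {c i})) \<le> 1" .
    qed
    also have "(\<Sum>i\<in>J-{i0}. (1::nat)) = n - 1" using cJ i0(1) finJ by simp
    finally have cX: "card X \<le> n" using assms(1) by linarith
    have "span X \<noteq> UNIV"
    proof
      assume "span X = UNIV"
      then have "CARD('d) \<le> card X" using dim_le_card[of UNIV X] finX by simp
      with cX assms(2) show False by simp
    qed
    then obtain z where z: "z \<noteq> 0" "\<forall>x\<in>span X. z \<bullet> x = 0" using span_not_UNIV_orthogonal by blast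
    have zX: "\<forall>x\<in>X. z \<bullet> x = 0" using z(2) span_base by blast
    have hi: "a \<bullet> z = c i \<bullet> z" if i: "i \<in> J - {i0}" and a: "a \<in> A i" for i a
    proof -
      have "\<forall>x\<in>(\<lambda>a. a - c i) ` (A i - {c i}). z \<bullet> x = 0" using zX i unfolding X_def by blast
      then show ?thesis using hc[of i a z] i a by blast
    qed
    have ss': "s \<bullet> z = s' \<bullet> z"
    proof -
      have "z \<bullet> (s - s') = 0" using zX unfolding X_def by blast
      then show ?thesis by (simp add: inner_diff_right inner_commute)
    qed
    have zt: "z \<bullet> (s - t) \<noteq> 0"
    proof
      assume h0: "z \<bullet> (s - t) = 0"
      then have st': "s \<bullet> z = t \<bullet> z" by (simp add: inner_diff_right inner_commute)
      have "\<forall>i\<in>J. \<forall>a\<in>A i. \<forall>b\<in>A i. a \<bullet> z = b \<bullet> z"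
      proof (intro ballI)
        fix i a b assume i: "i \<in> J" and a: "a \<in> A i" and b: "b \<in> A i"
        show "a \<bullet> z = b \<bullet> z"
        proof (cases "i = i0")
          case True
          then have "a \<bullet> z = s \<bullet> z" "b \<bullet> z = s \<bullet> z" using a b st(1) ss' st' by auto
          then show ?thesis by simp
        next
          case False
          then show ?thesis using hi[of i a] hi[of i b] i a b by simp
        qed
      qed
      then have "z = 0" by (rule P)
      with z show False by simp
    qed
    define u where "u = (if z \<bullet> (s - t) > 0 then z else - z)"
    have u0: "u \<noteq> 0" using z(1) by (simp add: u_def)
    have us: "u \<bullet> s = u \<bullet> s'" using ss' by (simp add: u_def inner_commute)
    have ut: "u \<bullet> t < u \<bullet> s" using zt by (auto simp: u_def inner_diff_right)
    have ui: "a \<bullet> u = c i \<bullet> u" if "i \<in> J - {i0}" "a \<in> A i" for i a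
      using hi[OF that] by (simp add: u_def)
    obtain \<tau> where tau: "\<tau> > 0" "\<forall>i\<in>J. argmx (F i) (v + \<tau> *\<^sub>R u) = {a\<in>A i. \<forall>b\<in>A i. b \<bullet> u \<le> a \<bullet> u}"
      using evex[OF ev[of u]] by blast
    define y where "y = v + \<tau> *\<^sub>R u"
    have y0: "argmx (F i0) y = {s, s'}"
    proof -
      have "argmx (F i0) y = {a\<in>{s,s',t}. \<forall>b\<in>{s,s',t}. b \<bullet> u \<le> a \<bullet> u}"
        using tau(2) i0(1) st(1) by (simp add: y_def)
      also have "\<dots> = {s, s'}"
        using us ut by (auto simp: inner_commute)
      finally show ?thesis .
    qed
    have yi: "\<forall>i\<in>J-{i0}. argmx (F i) y = A i"
    proof
      fix i assume i: "i \<in> J - {i0}"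
      have "argmx (F i) y = {a\<in>A i. \<forall>b\<in>A i. b \<bullet> u \<le> a \<bullet> u}" using tau(2) i by (simp add: y_def)
      also have "\<dots> = A i" using ui[OF i] by (auto simp: inner_commute)
      finally show "argmx (F i) y = A i" .
    qed
    have yv: "y \<noteq> v" using tau(1) u0 by (simp add: y_def)
    have "y \<in> Vtr (F i)" if i: "i \<in> J" for i
    proof (cases "i = i0")
      case True
      then show ?thesis using Vtr_iff[OF tp[OF i]] y0 st(2) by auto
    next
      case False
      then have "card (argmx (F i) y) = 2" using yi A2 i by auto
      then obtain a b where "argmx (F i) y = {a, b}" "a \<noteq> b" by (meson card_2_iff)
      then show ?thesis using Vtr_iff[OF tp[OF i]] by auto
    qed
    then have "y \<in> tinter F J" by (simp add: tinter_def)
    then show ?thesis using yv y0 yi by blast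
  qed
  have Eedge: "E {s, s'} \<in> curve_edges F n \<and> v \<in> E {s, s'} \<and> (\<exists>y. y \<in> E {s, s'} \<and> argmx (F i0) y = {s, s'})"
    if st: "A i0 = {s, s', t}" "s \<noteq> s'" "s \<noteq> t" "s' \<noteq> t" for s s' t
  proof -
    obtain y where y: "y \<noteq> v" "argmx (F i0) y = {s, s'}" "\<forall>i\<in>J-{i0}. argmx (F i) y = A i" "y \<in> tinter F J"
      using dir[OF st] by blast
    have Ey: "icell F J y = E {s, s'}" using icellE[OF y(3)] y(2) by simp
    have inI: "E {s, s'} \<in> icells F J" unfolding icells_def using Ey y(4) by (metis image_eqI)
    have vE: "v \<in> E {s, s'}" unfolding E_def using st(1) by (auto simp: A_def)
    have "y \<in> icell F J y" by (simp add: icell_def)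
    then have yE: "y \<in> E {s, s'}" using Ey by simp
    have le1: "aff_dim (E {s, s'}) \<le> 1"
      using tr2 inI cJ assms(2) by fastforce
    have "aff_dim {v, y} \<le> aff_dim (E {s, s'})" using vE yE by (intro aff_dim_subset) auto
    then have "aff_dim (E {s, s'}) = 1" using le1 y(1) by (simp split: if_splits)
    then have "E {s, s'} \<in> curve_edges F n" using inI unfolding curve_edges_def J_def by blast
    then show ?thesis using vE yE y(2) by blast
  qed
  have Edist: "E {s, s'} \<noteq> E T" if st: "A i0 = {s, s', t}" "s \<noteq> s'" "s \<noteq> t" "s' \<noteq> t" and T: "\<not> T \<subseteq> {s, s'}" for s s' t T
  proof
    assume eq: "E {s, s'} = E T"
    obtain y where y: "y \<in> E {s, s'}" "argmx (F i0) y = {s, s'}" using Eedge[OF st] by blast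
    have "y \<in> E T" using eq y(1) by simp
    then have "T \<subseteq> argmx (F i0) y" unfolding E_def by blast
    with y(2) T show False by simp
  qed
  have e1: "A i0 = {p, q, r}" "A i0 = {p, r, q}" "A i0 = {q, r, p}" using pqr(1) by auto
  have edges: "{E \<in> curve_edges F n. v \<in> E} = {E {p, q}, E {p, r}, E {q, r}}"
  proof (intro set_eqI iffI)
    fix E' assume "E' \<in> {E \<in> curve_edges F n. v \<in> E}"
    then have E': "E' \<in> icells F J" "aff_dim E' = 1" "v \<in> E'" unfolding curve_edges_def J_def by auto
    then obtain x0 where x0: "x0 \<in> tinter F J" "E' = icell F J x0" unfolding icells_def by auto
    define B where "B i = argmx (F i) x0" for i
    have BA: "B i \<subseteq> A i" if "i \<in> J" for i using E'(3) x0(2) that by (auto simp: icell_def A_def B_def)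
    have B2: "2 \<le> card (B i)" if i: "i \<in> J" for i
    proof -
      have "x0 \<in> Vtr (F i)" using x0(1) i by (simp add: tinter_def)
      then obtain a b where ab: "a \<in> B i" "b \<in> B i" "a \<noteq> b" using Vtr_iff[OF tp[OF i]] B_def by blast
      have "card {a, b} \<le> card (B i)" using ab Afin[OF i] BA[OF i] by (intro card_mono) (auto intro: finite_subset)
      then show ?thesis using ab by simp
    qed
    have Bi: "B i = A i" if i: "i \<in> J - {i0}" for i
    proof -
      have iJ: "i \<in> J" using i by blast
      have "card (B i) \<le> card (A i)" by (rule card_mono[OF Afin[OF iJ] BA[OF iJ]])
      then have "card (B i) = card (A i)" using B2[OF iJ] A2[OF i] by simp
      then show ?thesis by (rule card_subset_eq[OF Afin[OF iJ] BA[OF iJ]])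
    qed
    have Bne: "B i0 \<noteq> A i0"
    proof
      assume h: "B i0 = A i0"
      then have "\<forall>i\<in>J. B i = A i" using Bi by auto
      then have "icell F J x0 = icell F J v" by (simp add: icell_def B_def A_def)
      then have "E' = {v}" using x0(2) iv by simp
      then show False using E'(2) by simp
    qed
    have B0: "B i0 \<subseteq> {p, q, r}" "2 \<le> card (B i0)" using BA[OF i0(1)] B2[OF i0(1)] pqr(1) by auto
    have "B i0 = {p, q} \<or> B i0 = {p, r} \<or> B i0 = {q, r}"
    proof -
      have sub2: "B i0 = {a, b}" if h: "B i0 \<subseteq> {a, b}" "a \<noteq> b" for a b
      proof -
        have "card (B i0) \<le> card {a, b}" by (rule card_mono[OF _ h(1)]) simp
        then have "card (B i0) = card {a, b}" using B0(2) h(2) by simp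
        then show ?thesis by (rule card_subset_eq[OF _ h(1), rotated]) simp
      qed
      have "p \<notin> B i0 \<or> q \<notin> B i0 \<or> r \<notin> B i0" using Bne B0(1) pqr(1) by auto
      then show ?thesis
      proof (elim disjE)
        assume "p \<notin> B i0" then have "B i0 = {q, r}" using B0(1) pqr by (intro sub2) auto
        then show ?thesis by simp
      next
        assume "q \<notin> B i0" then have "B i0 = {p, r}" using B0(1) pqr by (intro sub2) auto
        then show ?thesis by simp
      next
        assume "r \<notin> B i0" then have "B i0 = {p, q}" using B0(1) pqr by (intro sub2) auto
        then show ?thesis by simp
      qed
    qed
    moreover have "E' = E (B i0)" using x0(2) icellE[of x0] Bi by (simp add: B_def)
    ultimately show "E' \<in> {E {p, q}, E {p, r}, E {q, r}}" by auto
  next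
    fix E' assume "E' \<in> {E {p, q}, E {p, r}, E {q, r}}"
    then show "E' \<in> {E \<in> curve_edges F n. v \<in> E}"
      using Eedge[OF e1(1)] Eedge[OF e1(2)] Eedge[OF e1(3)] pqr by auto
  qed
  have d1: "E {p, q} \<noteq> E {p, r}" using Edist[OF e1(1), of "{p, r}"] pqr by auto
  have d2: "E {p, q} \<noteq> E {q, r}" using Edist[OF e1(1), of "{q, r}"] pqr by auto
  have d3: "E {p, r} \<noteq> E {q, r}" using Edist[OF e1(2), of "{q, r}"] pqr by auto
  show ?thesis unfolding edges using d1 d2 d3 by simp
qed


end
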